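(* Let $A\ge 3$, $N\ge 2$, and let $w:\mathbf{Prof}\to\mathbf{Pref}$ be a social welfare function satisfying IIA with pairwise comparison functions $s_1,\dots,s_A:\{0,e,1\}^N\to\{0,e,1\}$, and satisfying Unanimity and Unrestricted Domain. Then: (1) for every $j\in\{1,\dots,A\}$ and every $x\in\{0,1\}^N$, $s_j(\neg x)=\neg s_j(x)$; (2) for every $x\in\{0,1\}^N$, $s_1(x)=s_2(x)=\dots=s_A(x)$.
   Context: Let $\mathcal{A}=\{a_1,\dots,a_A\}$ and $N\ge 2$ individuals; $e$ is a third symbol distinct from $0,1$. Let $\sigma(i)=i+1$ for $i<A$, $\sigma(A)=1$. A preference relation is $t\in\{0,e,1\}^A$, where $t_i$ records $a_i$ versus $a_{\sigma(i)}$: $0$ means $a_i\prec a_{\sigma(i)}$, $1$ means $a_{\sigma(i)}\prec a_i$, $e$ means $a_i\sim a_{\sigma(i)}$. It corresponds to a weak order if some complete transitive relation on $\mathcal{A}$ realizes all these comparisons; otherwise it is a preference cycle. $\mathbf{Pref}=\{0,e,1\}^A$. A profile is an $A\times N$ matrix over $\{0,e,1\}$ whose every column corresponds to a weak order; $\mathbf{Prof}$ is the set of profiles, written in row form $(r_1,\dots,r_A)$ with $r_j\in\{0,e,1\}^N$. A social welfare function is a map $w:\mathbf{Prof}\to\mathbf{Pref}$. It satisfies IIA if there are functions $s_1,\dots,s_A:\{0,e,1\}^N\to\{0,e,1\}$ (pairwise comparison functions) with $w(r_1,\dots,r_A)=(s_1(r_1),\dots,s_A(r_A))$ for every profile. Unanimity: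 $s_j(\Delta x)=x$ for all $j$ and $x\in\{0,1\}$, where $\Delta x=(x,\dots,x)$. Unrestricted Domain: $w(m)$ corresponds to a weak order for every profile $m$. Negation $\neg$ maps $0\mapsto1$, $1\mapsto0$, $e\mapsto e$, acting entrywise on tuples. *)

theory Defs
  imports Main
begin

datatype sym = S0 | Se | S1

fun neg :: "sym \<Rightarrow> sym" where
  "neg S0 = S1" | "neg S1 = S0" | "neg Se = Se"

text \<open>Alternatives a_1..a_A are indexed 0..A-1; sigma is the cyclic successor.\<close>
definition sigma :: "nat \<Rightarrow> nat \<Rightarrow> nat" where
  "sigma A i = Suc i mod A"

text \<open>R x y means a_x \<preceq> a_y (weakly). A symbol c records the comparison of a_i vs a_{sigma i}.\<close>
definition realizes :: "(nat \<Rightarrow> nat \<Rightarrow> bool) \<Rightarrow> sym \<Rightarrow> nat \<Rightarrow> nat \<Rightarrow> bool" where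
  "realizes R c i j = (case c of
      S0 \<Rightarrow> R i j \<and> \<not> R j i
    | S1 \<Rightarrow> R j i \<and> \<not> R i j
    | Se \<Rightarrow> R i j \<and> R j i)"

definition weak_order :: "nat \<Rightarrow> sym list \<Rightarrow> bool" where
  "weak_order A t \<longleftrightarrow> length t = A \<and>
     (\<exists>R. (\<forall>x<A. \<forall>y<A. R x y \<or> R y x)
        \<and> (\<forall>x<A. \<forall>y<A. \<forall>z<A. R x y \<longrightarrow> R y z \<longrightarrow> R x z)
        \<and> (\<forall>i<A. realizes R (t ! i) i (sigma A i)))"

definition column :: "nat \<Rightarrow> sym list list \<Rightarrow> nat \<Rightarrow> sym list" where
  "column A m k = map (\<lambda>j. m ! j ! k) [0..<A]"

definition is_profile :: "nat \<Rightarrow> nat \<Rightarrow> sym list list \<Rightarrow> bool" where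
  "is_profile A N m \<longleftrightarrow> length m = A \<and> (\<forall>j<A. length (m ! j) = N)
      \<and> (\<forall>k<N. weak_order A (column A m k))"

end

theory Submission
  imports Defs
begin

lemma sigma_lt: "i < A \<Longrightarrow> sigma A i = (if i = A - 1 then 0 else Suc i)"
  by (simp add: sigma_def)

lemma cyc_chain:
  assumes tot: "\<forall>x<A. \<forall>y<A. R x y \<or> R y x"
    and tr: "\<forall>x<A. \<forall>y<A. \<forall>z<A. R x y \<longrightarrow> R y z \<longrightarrow> R x z"
    and st: "\<forall>i<A. R i (sigma A i)"
  shows "i + k < A \<Longrightarrow> R i (i + k)"
proof (induction k)
  case 0
  then show ?case using tot by auto
next
  case (Suc k)
  then have "R i (i + k)" by simp
  moreover have "R (i + k) (Suc (i + k))"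
    using st[rule_format, of "i+k"] Suc.prems by (simp add: sigma_lt split: if_splits)
  ultimately show ?case using tr[rule_format, of i "i+k" "Suc (i+k)"] Suc.prems by simp
qed

lemma cyc:
  assumes tot: "\<forall>x<A. \<forall>y<A. R x y \<or> R y x"
    and tr: "\<forall>x<A. \<forall>y<A. \<forall>z<A. R x y \<longrightarrow> R y z \<longrightarrow> R x z"
    and st: "\<forall>i<A. R i (sigma A i)"
    and i0: "i0 < A"
  shows "R (sigma A i0) i0"
proof -
  have ch: "\<And>i k. i + k < A \<Longrightarrow> R i (i + k)" using cyc_chain[OF tot tr st] by blast
  have last0: "R (A - 1) 0" using st[rule_format, of "A - 1"] i0 by (simp add: sigma_lt)
  show ?thesis
  proof (cases "i0 = A - 1")
    case True
    then show ?thesis using ch[of 0 "A - 1"] i0 by (simp add: sigma_lt)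
  next
    case False
    have e: "Suc i0 + (A - 1 - Suc i0) = A - 1" using False i0 by simp
    have a0: "R (Suc i0) (Suc i0 + (A - 1 - Suc i0))"
      by (rule ch) (use e i0 in linarith)
    have a: "R (Suc i0) (A - 1)" using a0 unfolding e .
    have b: "R 0 i0" using ch[of 0 i0] i0 by simp
    have lt: "Suc i0 < A" "A - 1 < A" "0 < A" using False i0 by auto
    have "R (Suc i0) 0" using tr[rule_format, OF lt(1) lt(2) lt(3)] a last0 by blast
    then have "R (Suc i0) i0" using tr[rule_format, OF lt(1) lt(3) i0] b by blast
    then show ?thesis using False i0 by (simp add: sigma_lt)
  qed
qed

lemma wo_S0:
  assumes "weak_order A t" "i < A" "t ! i = S0"
  shows "\<exists>i<A. t ! i = S1"
proof (rule ccontr)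
  assume no: "\<not> (\<exists>i<A. t ! i = S1)"
  from assms(1) obtain R where tot: "\<forall>x<A. \<forall>y<A. R x y \<or> R y x"
    and tr: "\<forall>x<A. \<forall>y<A. \<forall>z<A. R x y \<longrightarrow> R y z \<longrightarrow> R x z"
    and re: "\<forall>i<A. realizes R (t ! i) i (sigma A i)"
    unfolding weak_order_def by blast
  have st: "\<forall>i<A. R i (sigma A i)"
  proof (intro allI impI)
    fix j assume j: "j < A"
    show "R j (sigma A j)" using re[rule_format, OF j] no j
      by (cases "t ! j") (auto simp: realizes_def)
  qed
  have "R (sigma A i) i" using cyc[OF tot tr st assms(2)] .
  moreover have "\<not> R (sigma A i) i" using re[rule_format, OF assms(2)] assms(3)
    by (simp add: realizes_def)
  ultimately show False by simp
qed

lemma wo_S1: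
  assumes "weak_order A t" "i < A" "t ! i = S1"
  shows "\<exists>i<A. t ! i = S0"
proof (rule ccontr)
  assume no: "\<not> (\<exists>i<A. t ! i = S0)"
  from assms(1) obtain R where tot: "\<forall>x<A. \<forall>y<A. R x y \<or> R y x"
    and tr: "\<forall>x<A. \<forall>y<A. \<forall>z<A. R x y \<longrightarrow> R y z \<longrightarrow> R x z"
    and re: "\<forall>i<A. realizes R (t ! i) i (sigma A i)"
    unfolding weak_order_def by blast
  let ?R = "\<lambda>a b. R b a"
  have tot': "\<forall>x<A. \<forall>y<A. ?R x y \<or> ?R y x" using tot by blast
  have tr': "\<forall>x<A. \<forall>y<A. \<forall>z<A. ?R x y \<longrightarrow> ?R y z \<longrightarrow> ?R x z" using tr by blast
  have st: "\<forall>i<A. ?R i (sigma A i)"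
  proof (intro allI impI)
    fix j assume j: "j < A"
    show "?R j (sigma A j)" using re[rule_format, OF j] no j
      by (cases "t ! j") (auto simp: realizes_def)
  qed
  have "?R (sigma A i) i" using cyc[OF tot' tr' st assms(2)] .
  moreover have "\<not> ?R (sigma A i) i" using re[rule_format, OF assms(2)] assms(3)
    by (simp add: realizes_def)
  ultimately show False by simp
qed

lemma col_ok:
  assumes r: "r < A" and c: "c \<in> {S0, S1}" and A2: "2 \<le> A"
  shows "weak_order A (map (\<lambda>i. if i = r then neg c else c) [0..<A])"
proof -
  define h where "h i = (if r < i then i - Suc r else i + A - Suc r)" for i :: nat
  have hs: "\<And>i. i < A \<Longrightarrow> i \<noteq> r \<Longrightarrow> h (sigma A i) = Suc (h i)"
    using r by (auto simp: h_def sigma_lt)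
  have hr: "h (sigma A r) = 0" "h r = A - 1" using r by (auto simp: h_def sigma_lt)
  have A1: "A - 1 > 0" using A2 by auto
  show ?thesis
  proof (cases "c = S0")
    case True
    let ?R = "\<lambda>a b. h a \<le> h b"
    have "\<forall>i<A. realizes ?R ((map (\<lambda>i. if i = r then neg c else c) [0..<A]) ! i) i (sigma A i)"
    proof (intro allI impI)
      fix i assume i: "i < A"
      show "realizes ?R ((map (\<lambda>i. if i = r then neg c else c) [0..<A]) ! i) i (sigma A i)"
      proof (cases "i = r")
        case True
        then show ?thesis using hr i \<open>c = S0\<close> A1 by (auto simp: realizes_def)
      next
        case False
        then show ?thesis using hs[OF i False] i \<open>c = S0\<close> by (auto simp: realizes_def)
      qed
    qed
    then show ?thesis unfolding weak_order_def by (intro conjI exI[of _ ?R]) auto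
  next
    case False
    then have c1: "c = S1" using c by auto
    let ?R = "\<lambda>a b. h b \<le> h a"
    have "\<forall>i<A. realizes ?R ((map (\<lambda>i. if i = r then neg c else c) [0..<A]) ! i) i (sigma A i)"
    proof (intro allI impI)
      fix i assume i: "i < A"
      show "realizes ?R ((map (\<lambda>i. if i = r then neg c else c) [0..<A]) ! i) i (sigma A i)"
      proof (cases "i = r")
        case True
        then show ?thesis using hr i c1 A1 by (auto simp: realizes_def)
      next
        case False
        then show ?thesis using hs[OF i False] i c1 by (auto simp: realizes_def)
      qed
    qed
    then show ?thesis unfolding weak_order_def by (intro conjI exI[of _ ?R]) auto
  qed
qed

definition prof :: "nat \<Rightarrow> nat \<Rightarrow> nat \<Rightarrow> nat \<Rightarrow> sym list \<Rightarrow> sym \<Rightarrow> sym list list" where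
  "prof A N p q x c = map (\<lambda>i. if i = p then x else if i = q then map neg x else replicate N c) [0..<A]"

lemma neg_neg[simp]: "neg (neg a) = a" by (cases a) auto

lemma prof_ok:
  assumes "p < A" "q < A" "p \<noteq> q" "length x = N" "set x \<subseteq> {S0, S1}" "c \<in> {S0, S1}" "2 \<le> A"
  shows "is_profile A N (prof A N p q x c)"
  unfolding is_profile_def
proof (intro conjI allI impI)
  show "length (prof A N p q x c) = A" by (simp add: prof_def)
  fix j assume "j < A"
  then show "length (prof A N p q x c ! j) = N" using assms by (simp add: prof_def)
next
  fix k assume k: "k < N"
  have xk: "x ! k \<in> {S0, S1}" using assms(4,5) k nth_mem by blast
  define r where "r = (if x ! k = c then q else p)"
  have "column A (prof A N p q x c) k = map (\<lambda>i. if i = r then neg c else c) [0..<A]"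
    unfolding column_def
  proof (rule map_cong[OF refl])
    fix i assume "i \<in> set [0..<A]"
    then have i: "i < A" by simp
    show "prof A N p q x c ! i ! k = (if i = r then neg c else c)"
      using i k assms xk by (auto simp: prof_def r_def)
  qed
  moreover have "r < A" using assms by (simp add: r_def)
  ultimately show "weak_order A (column A (prof A N p q x c) k)"
    using col_ok assms(6,7) by simp
qed

theorem mainTheorem6:
  fixes A N :: nat
    and w :: "sym list list \<Rightarrow> sym list"
    and s :: "nat \<Rightarrow> sym list \<Rightarrow> sym"
  assumes "A \<ge> 3" and "N \<ge> 2"
    and IIA: "\<forall>m. is_profile A N m \<longrightarrow> w m = map (\<lambda>j. s j (m ! j)) [0..<A]"
    and unanimity: "\<forall>j<A. \<forall>x\<in>{S0, S1}. s j (replicate N x) = x"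
    and unrestricted: "\<forall>m. is_profile A N m \<longrightarrow> weak_order A (w m)"
  shows "(\<forall>j<A. \<forall>x. length x = N \<and> set x \<subseteq> {S0, S1} \<longrightarrow> s j (map neg x) = neg (s j x))
       \<and> (\<forall>x. length x = N \<and> set x \<subseteq> {S0, S1} \<longrightarrow> (\<forall>j<A. \<forall>k<A. s j x = s k x))"
proof -
  have third: "\<And>p q. \<exists>l<A. l \<noteq> p \<and> l \<noteq> q"
  proof -
    fix p q :: nat
    show "\<exists>l<A. l \<noteq> p \<and> l \<noteq> q"
    proof (cases "0 \<noteq> p \<and> 0 \<noteq> q")
      case True then show ?thesis using assms(1) by (intro exI[of _ 0]) auto
    next
      case False
      show ?thesis
      proof (cases "1 \<noteq> p \<and> 1 \<noteq> q")
        case True then show ?thesis using assms(1) by (intro exI[of _ 1]) auto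
      next
        case False2: False
        then show ?thesis using False assms(1) by (intro exI[of _ 2]) auto
      qed
    qed
  qed
  have one: "\<And>p q x c. p < A \<Longrightarrow> q < A \<Longrightarrow> p \<noteq> q \<Longrightarrow> length x = N \<Longrightarrow> set x \<subseteq> {S0, S1}
      \<Longrightarrow> c \<in> {S0, S1} \<Longrightarrow> s p x = neg c \<or> s q (map neg x) = neg c"
  proof -
    fix p q x c
    assume pq: "p < A" "q < A" "p \<noteq> q" and x: "length x = N" "set x \<subseteq> {S0, S1}" and c: "c \<in> {S0, S1}"
    define m where "m = prof A N p q x c"
    have mp: "is_profile A N m" unfolding m_def using prof_ok pq x c assms(1) by simp
    define t where "t = w m"
    have t: "t = map (\<lambda>j. s j (m ! j)) [0..<A]" using IIA mp t_def by simp
    have wo: "weak_order A t" using unrestricted mp t_def by simp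
    obtain l where l: "l < A" "l \<noteq> p" "l \<noteq> q" using third by blast
    have ul: "s l (replicate N c) = c" using unanimity l(1) c by blast
    have tl: "t ! l = c" using l ul by (simp add: t m_def prof_def)
    have ex: "\<exists>i<A. t ! i = neg c"
    proof (cases "c = S0")
      case True
      then show ?thesis using wo_S0[OF wo l(1)] tl by simp
    next
      case False
      then have "c = S1" using c by simp
      then show ?thesis using wo_S1[OF wo l(1)] tl by simp
    qed
    then obtain i where i: "i < A" "t ! i = neg c" by blast
    have "i = p \<or> i = q"
    proof (rule ccontr)
      assume "\<not> (i = p \<or> i = q)"
      moreover have "s i (replicate N c) = c" using unanimity i(1) c by blast
      ultimately have "t ! i = c" using i(1) by (simp add: t m_def prof_def)
      then show False using i(2) c by auto
    qed
    then show "s p x = neg c \<or> s q (map neg x) = neg c"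
      using i pq by (auto simp: t m_def prof_def)
  qed
  have K: "\<And>p q x. p < A \<Longrightarrow> q < A \<Longrightarrow> p \<noteq> q \<Longrightarrow> length x = N \<Longrightarrow> set x \<subseteq> {S0, S1}
      \<Longrightarrow> s q (map neg x) = neg (s p x)"
  proof -
    fix p q x
    assume h: "p < A" "q < A" "p \<noteq> q" "length x = N" "set x \<subseteq> {S0, S1}"
    have a: "s p x = S1 \<or> s q (map neg x) = S1" using one[OF h, of S0] by simp
    have b: "s p x = S0 \<or> s q (map neg x) = S0" using one[OF h, of S1] by simp
    show "s q (map neg x) = neg (s p x)"
      using a b by (cases "s p x"; cases "s q (map neg x)") auto
  qed
  have negbin: "\<And>x. set x \<subseteq> {S0, S1} \<Longrightarrow> set (map neg x) \<subseteq> {S0, S1}" by auto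
  have two: "\<And>x j k. length x = N \<Longrightarrow> set x \<subseteq> {S0, S1} \<Longrightarrow> j < A \<Longrightarrow> k < A \<Longrightarrow> s j x = s k x"
  proof -
    fix x j k
    assume h: "length x = N" "set x \<subseteq> {S0, S1}" "j < A" "k < A"
    obtain l where l: "l < A" "l \<noteq> j" "l \<noteq> k" using third by blast
    have "s l (map neg x) = neg (s j x)" using K[of j l x] h l by simp
    moreover have "s l (map neg x) = neg (s k x)" using K[of k l x] h l by simp
    ultimately have "neg (neg (s j x)) = neg (neg (s k x))" by simp
    then show "s j x = s k x" by simp
  qed
  show ?thesis
  proof (intro conjI allI impI)
    fix j x assume j: "j < A" and x: "length x = N \<and> set x \<subseteq> {S0, S1}"
    obtain l where l: "l < A" "l \<noteq> j" using third by blast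
    have "s l (map neg x) = neg (s j x)" using K[of j l x] j x l by simp
    moreover have "s j (map neg x) = s l (map neg x)" using two[of "map neg x" j l] j l x negbin by simp
    ultimately show "s j (map neg x) = neg (s j x)" by simp
  next
    fix x j k assume "length x = N \<and> set x \<subseteq> {S0, S1}" "j < A" "k < A"
    then show "s j x = s k x" using two by blast
  qed
qed

end
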